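(* Let $l\in\mathbb{N}$ and let $(e^i_n)_{i=1,n\in\mathbb{N}}^l$ be a plegma spreading sequence in a Banach space such that, for each $1\le i\le l$, the sequence $(e^i_n)_n$ is unconditional. Then the whole family $(e^i_n)_{i=1,n\in\mathbb{N}}^l$ is an unconditional sequence.
   Context: For $k\in\mathbb{N}$, $[\mathbb{N}]^k$ denotes the $k$-element subsets of $\mathbb{N}$, each identified with its increasing enumeration $s(1)<\cdots<s(k)$. A plegma family in $[\mathbb{N}]^k$ is a finite sequence $(s_i)_{i=1}^l$ in $[\mathbb{N}]^k$ with (i) $s_{i_1}(j_1)<s_{i_2}(j_2)$ for all $1\le j_1<j_2\le k$ and all $1\le i_1,i_2\le l$, and (ii) $s_{i_1}(j)\le s_{i_2}(j)$ for all $1\le i_1<i_2\le l$ and $1\le j\le k$. For such $s=(s_i)_{i=1}^l$ and a vector $x=\sum_{(i,j)\in F}a_{ij}e^i_j$ with $F\subset\{1,\ldots,l\}\times\{1,\ldots,k\}$, the plegma shift of $x$ is $s(x)=\sum_{(i,j)\in F}a_{ij}e^i_{s_i(j)}$. A sequence $(e^i_n)_{i=1,n\in\mathbb{N}}^l$ in a Banach space is plegma spreading if each $(e^i_n)_n$ is a normalized Schauder basic sequence and, for every $x\in\mathrm{span}\{e^i_n\}$, $\|x\|=\|s(x)\|$ for every plegma shift $s(x)$ of $x$ (for every $k$ and every plegma family $s$ in $[\mathbb{N}]^k$ for which it is defined). *)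

theory Defs
  imports "HOL-Analysis.Analysis"
begin

text \<open>Indices are 0-based: rows i < l, columns n :: nat, positions j < k.\<close>

definition schauder_basic :: "(nat \<Rightarrow> 'a::real_normed_vector) \<Rightarrow> bool" where
  "schauder_basic f \<longleftrightarrow>
     (\<forall>x \<in> closure (span (range f)). \<exists>!a. (\<lambda>n. a n *\<^sub>R f n) sums x)"

definition unconditional_basic :: "(nat \<Rightarrow> 'a::real_normed_vector) \<Rightarrow> bool" where
  "unconditional_basic f \<longleftrightarrow> schauder_basic f \<and>
     (\<forall>a. summable (\<lambda>n. a n *\<^sub>R f n) \<longrightarrow> (\<lambda>n. a n *\<^sub>R f n) summable_on UNIV)"

text \<open>A plegma family (s_i)_{i<l} in [nat]^k, each s_i given by its increasing enumeration
  s i 0 < ... < s i (k-1).\<close>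
definition plegma_family :: "nat \<Rightarrow> nat \<Rightarrow> (nat \<Rightarrow> nat \<Rightarrow> nat) \<Rightarrow> bool" where
  "plegma_family l k s \<longleftrightarrow>
     (\<forall>i<l. strict_mono_on {..<k} (s i)) \<and>
     (\<forall>j1 j2 i1 i2. j1 < j2 \<and> j2 < k \<and> i1 < l \<and> i2 < l \<longrightarrow> s i1 j1 < s i2 j2) \<and>
     (\<forall>i1 i2 j. i1 < i2 \<and> i2 < l \<and> j < k \<longrightarrow> s i1 j \<le> s i2 j)"

definition plegma_spreading :: "nat \<Rightarrow> (nat \<Rightarrow> nat \<Rightarrow> 'a::real_normed_vector) \<Rightarrow> bool" where
  "plegma_spreading l e \<longleftrightarrow>
     (\<forall>i<l. (\<forall>n. norm (e i n) = 1) \<and> schauder_basic (e i)) \<and>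
     (\<forall>k s F a. plegma_family l k s \<and> F \<subseteq> {..<l} \<times> {..<k} \<longrightarrow>
        norm (\<Sum>(i,j)\<in>F. a i j *\<^sub>R e i j) = norm (\<Sum>(i,j)\<in>F. a i j *\<^sub>R e i (s i j)))"

definition unconditional_family :: "nat \<Rightarrow> (nat \<Rightarrow> nat \<Rightarrow> 'a::real_normed_vector) \<Rightarrow> bool" where
  "unconditional_family l e \<longleftrightarrow>
     (\<exists>\<sigma>. bij_betw \<sigma> (UNIV :: nat set) ({..<l} \<times> (UNIV :: nat set)) \<and>
          unconditional_basic (\<lambda>n. e (fst (\<sigma> n)) (snd (\<sigma> n))))"

end

theory Submission
  imports Defs
begin


lemma summable_on_cauchyI:
  fixes f :: "'i \<Rightarrow> 'b::banach"
  assumes "\<And>e. e>0 \<Longrightarrow> \<exists>F0. finite F0 \<and> (\<forall>B. finite B \<and> B \<inter> F0 = {} \<longrightarrow> norm (sum f B) < e)"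
  shows "f summable_on UNIV"
proof -
  have "cauchy_filter (filtermap (sum f) (finite_subsets_at_top UNIV))"
    unfolding cauchy_filter_metric_filtermap
  proof (intro allI impI)
    fix e::real assume "e>0"
    then obtain F0 where F0: "finite F0" "\<forall>B. finite B \<and> B \<inter> F0 = {} \<longrightarrow> norm (sum f B) < e/2"
      using assms[of "e/2"] by auto
    let ?P = "\<lambda>F. finite F \<and> F0 \<subseteq> F"
    have "eventually ?P (finite_subsets_at_top UNIV)"
      unfolding eventually_finite_subsets_at_top using F0(1) by blast
    moreover have "dist (sum f F1) (sum f F2) < e" if "?P F1" "?P F2" for F1 F2
    proof -
      have "sum f F1 = sum f (F1 \<inter> F2) + sum f (F1 - F2)" using that sum.Int_Diff by blast
      moreover have "sum f F2 = sum f (F1 \<inter> F2) + sum f (F2 - F1)" using that sum.Int_Diff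
        by (metis inf_commute)
      ultimately have "dist (sum f F1) (sum f F2) = norm (sum f (F1 - F2) - sum f (F2 - F1))"
        by (simp add: dist_norm)
      also have "\<dots> \<le> norm (sum f (F1 - F2)) + norm (sum f (F2 - F1))" by (rule norm_triangle_ineq4)
      also have "\<dots> < e/2 + e/2"
        using F0(2) that by (intro add_strict_mono) auto
      finally show ?thesis by simp
    qed
    ultimately show "\<exists>P. eventually P (finite_subsets_at_top UNIV) \<and> (\<forall>x y. P x \<and> P y \<longrightarrow> dist (sum f x) (sum f y) < e)"
      by blast
  qed
  moreover have "complete (UNIV::'b set)"
    by (meson Cauchy_convergent UNIV_I complete_def convergent_def)
  ultimately obtain L' where "(sum f \<longlongrightarrow> L') (finite_subsets_at_top UNIV)"
    using complete_uniform[where S=UNIV] by (force simp add: filterlim_def)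
  then show ?thesis
    using summable_on_def has_sum_def by blast
qed

lemma has_sum_cauchyD:
  fixes f :: "'i \<Rightarrow> 'b::real_normed_vector"
  assumes "(f has_sum x) UNIV" "e>0"
  shows "\<exists>F0. finite F0 \<and> (\<forall>B. finite B \<and> B \<inter> F0 = {} \<longrightarrow> norm (sum f B) < e)"
proof -
  have "eventually (\<lambda>F. dist (sum f F) x < e/2) (finite_subsets_at_top UNIV)"
    using assms unfolding has_sum_def by (intro tendstoD) auto
  then obtain X where X: "finite X" "\<And>Y. finite Y \<Longrightarrow> X \<subseteq> Y \<Longrightarrow> dist (sum f Y) x < e/2"
    unfolding eventually_finite_subsets_at_top by auto
  have "norm (sum f B) < e" if "finite B" "B \<inter> X = {}" for B
  proof -
    have "sum f (X \<union> B) = sum f X + sum f B" using that X(1) by (simp add: sum.union_disjoint inf_commute)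
    then have "norm (sum f B) = dist (sum f (X \<union> B)) (sum f X)" by (simp add: dist_norm)
    also have "\<dots> \<le> dist (sum f (X \<union> B)) x + dist (sum f X) x" by (rule dist_triangle2)
    also have "\<dots> < e/2 + e/2" using X that by (intro add_strict_mono) auto
    finally show ?thesis by simp
  qed
  then show ?thesis using X(1) by blast
qed

lemma has_sum_diff':
  fixes f g :: "'i \<Rightarrow> 'b::real_normed_vector"
  assumes "(f has_sum a) A" "(g has_sum b) A"
  shows "((\<lambda>x. f x - g x) has_sum (a - b)) A"
proof -
  have "sum (\<lambda>x. f x - g x) = (\<lambda>F. sum f F - sum g F)" by (rule ext) (simp add: sum_subtractf)
  then show ?thesis using assms unfolding has_sum_def by (simp add: tendsto_diff)
qed

lemma has_sum_norm_le:
  fixes f :: "'i \<Rightarrow> 'b::real_normed_vector"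
  assumes "(f has_sum a) A" "\<And>F. finite F \<Longrightarrow> F \<subseteq> A \<Longrightarrow> norm (sum f F) \<le> M"
  shows "norm a \<le> M"
proof -
  have "((\<lambda>F. norm (sum f F)) \<longlongrightarrow> norm a) (finite_subsets_at_top A)"
    using assms(1) unfolding has_sum_def by (rule tendsto_norm)
  moreover have "eventually (\<lambda>F. norm (sum f F) \<le> M) (finite_subsets_at_top A)"
    using assms(2) by (auto intro: eventually_finite_subsets_at_top_weakI)
  ultimately show ?thesis
    using tendsto_upperbound finite_subsets_at_top_neq_bot by blast
qed



lemma closure_span_add:
  fixes x y :: "'a::real_normed_vector"
  assumes "x \<in> closure (span S)" "y \<in> closure (span S)"
  shows "x + y \<in> closure (span S)"
proof -
  obtain u where u: "\<And>n. u n \<in> span S" "u \<longlonglongrightarrow> x" using closure_sequential[THEN iffD1, OF assms(1)] by metis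
  obtain v where v: "\<And>n. v n \<in> span S" "v \<longlonglongrightarrow> y" using closure_sequential[THEN iffD1, OF assms(2)] by metis
  have "\<forall>n. u n + v n \<in> span S" using u v by (simp add: span_add)
  moreover have "(\<lambda>n. u n + v n) \<longlonglongrightarrow> x + y" using u v by (intro tendsto_add)
  ultimately show ?thesis by (intro closure_sequential[THEN iffD2] exI[of _ "\<lambda>n. _ n"]) (rule conjI)
qed

lemma closure_span_scale:
  fixes x :: "'a::real_normed_vector"
  assumes "x \<in> closure (span S)"
  shows "c *\<^sub>R x \<in> closure (span S)"
proof -
  obtain u where u: "\<And>n. u n \<in> span S" "u \<longlonglongrightarrow> x" using closure_sequential[THEN iffD1, OF assms(1)] by metis
  have "\<forall>n. c *\<^sub>R u n \<in> span S" using u by (simp add: span_scale)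
  moreover have "(\<lambda>n. c *\<^sub>R u n) \<longlonglongrightarrow> c *\<^sub>R x" using u by (intro tendsto_scaleR tendsto_const)
  ultimately show ?thesis by (intro closure_sequential[THEN iffD2] exI[of _ "\<lambda>n. _ n"]) (rule conjI)
qed

lemma closure_span_diff:
  fixes x y :: "'a::real_normed_vector"
  assumes "x \<in> closure (span S)" "y \<in> closure (span S)"
  shows "x - y \<in> closure (span S)"
  using closure_span_add[OF assms(1) closure_span_scale[OF assms(2), of "-1"]] by simp

lemma geom_bound:
  fixes w :: "nat \<Rightarrow> 'a::banach"
  assumes "\<And>k. norm (w k) \<le> c / 2^k"
  shows "summable w" "norm (suminf w) \<le> 2 * c"
proof -
  have fe: "(\<lambda>k. c * (1/2::real)^k) = (\<lambda>k. c / 2^k)" by (rule ext) (simp add: power_divide)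
  have g: "summable (\<lambda>k. c / 2^k)"
    unfolding fe[symmetric] by (intro summable_mult summable_geometric) simp
  have s: "(\<Sum>k. c / 2^k) = 2 * c" unfolding fe[symmetric]
    using suminf_geometric[of "1/2::real"] suminf_mult[OF summable_geometric[of "1/2::real"], of c] by simp
  show sw: "summable w" by (rule summable_comparison_test'[OF g]) (rule assms)
  have sn: "summable (\<lambda>k. norm (w k))" by (rule summable_comparison_test'[OF g]) (simp add: assms)
  have "norm (suminf w) \<le> (\<Sum>k. norm (w k))" using sn by (rule summable_norm)
  also have "\<dots> \<le> (\<Sum>k. c / 2^k)" using sn g assms by (intro suminf_le) simp_all
  finally show "norm (suminf w) \<le> 2 * c" using s by simp
qed



lemma unc_supp_const:
  fixes f :: "nat \<Rightarrow> 'a::banach"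
  assumes nf: "\<And>n. norm (f n) = 1" and ub: "unconditional_basic f"
  shows "\<exists>K\<ge>0. \<forall>S A d. finite S \<longrightarrow> A \<subseteq> S \<longrightarrow>
           norm (\<Sum>n\<in>A. d n *\<^sub>R f n) \<le> K * norm (\<Sum>n\<in>S. d n *\<^sub>R f n)"
proof -
  define Y where "Y = closure (span (range f))"
  define HS where "HS a y \<longleftrightarrow> ((\<lambda>n. a n *\<^sub>R f n) has_sum y) UNIV" for a y
  define bnd where "bnd a M \<longleftrightarrow> (\<forall>A. finite A \<longrightarrow> norm (\<Sum>n\<in>A. a n *\<^sub>R f n) \<le> M)" for a M
  have sch0: "\<forall>x\<in>Y. \<exists>!a. (\<lambda>n. a n *\<^sub>R f n) sums x"
    using ub unfolding unconditional_basic_def schauder_basic_def Y_def by (rule conjunct1)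
  have sch: "\<exists>!a. (\<lambda>n. a n *\<^sub>R f n) sums x" if "x \<in> Y" for x
    using sch0 that by (rule bspec)
  have unc0: "\<forall>a. summable (\<lambda>n. a n *\<^sub>R f n) \<longrightarrow> (\<lambda>n. a n *\<^sub>R f n) summable_on UNIV"
    using ub unfolding unconditional_basic_def by (rule conjunct2)
  have unc: "(\<lambda>n. a n *\<^sub>R f n) summable_on UNIV" if "summable (\<lambda>n. a n *\<^sub>R f n)" for a
    using unc0 that by blast
  have closedY: "closed Y" unfolding Y_def by simp
  have Y0: "0 \<in> Y" unfolding Y_def by (rule subsetD[OF closure_subset span_zero])
  have Yadd: "x + y \<in> Y" if "x \<in> Y" "y \<in> Y" for x y using that unfolding Y_def by (rule closure_span_add)
  have Ydiff: "x - y \<in> Y" if "x \<in> Y" "y \<in> Y" for x y using that unfolding Y_def by (rule closure_span_diff)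
  have Yscale: "c *\<^sub>R x \<in> Y" if "x \<in> Y" for x c using that unfolding Y_def by (rule closure_span_scale)
  have F1: "(\<lambda>n. a n *\<^sub>R f n) sums y" if "HS a y" for a y
    using that unfolding HS_def by (rule has_sum_imp_sums)
  have F2: "y \<in> Y" if "HS a y" for a y
  proof -
    have lim: "(sum (\<lambda>n. a n *\<^sub>R f n) \<longlongrightarrow> y) (finite_subsets_at_top UNIV)"
      using that unfolding HS_def has_sum_def .
    have ev: "eventually (\<lambda>F. sum (\<lambda>n. a n *\<^sub>R f n) F \<in> Y) (finite_subsets_at_top UNIV)"
    proof (intro eventually_finite_subsets_at_top_weakI)
      fix F :: "nat set" assume "finite F"
      have "sum (\<lambda>n. a n *\<^sub>R f n) F \<in> span (range f)"
        by (intro span_sum span_scale span_base) auto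
      then show "sum (\<lambda>n. a n *\<^sub>R f n) F \<in> Y" unfolding Y_def by (rule subsetD[OF closure_subset])
    qed
    show ?thesis by (rule Lim_in_closed_set[OF closedY ev finite_subsets_at_top_neq_bot lim])
  qed
  have F3: "\<exists>a. HS a y" if yY: "y \<in> Y" for y
  proof -
    obtain a where a: "(\<lambda>n. a n *\<^sub>R f n) sums y" using sch[OF yY] by (rule ex1E) blast
    then have "(\<lambda>n. a n *\<^sub>R f n) summable_on UNIV" by (intro unc sums_summable)
    then have hs: "HS a (infsum (\<lambda>n. a n *\<^sub>R f n) UNIV)" unfolding HS_def by simp
    have "infsum (\<lambda>n. a n *\<^sub>R f n) UNIV = y" by (rule sums_unique2[OF F1[OF hs] a])
    then show ?thesis using hs by (intro exI[of _ a]) simp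
  qed
  have F4: "a = b" if h4: "HS a y" "HS b y" for a b y
  proof -
    obtain c where "(\<lambda>n. c n *\<^sub>R f n) sums y" and c: "\<forall>d. (\<lambda>n. d n *\<^sub>R f n) sums y \<longrightarrow> d = c"
      using sch[OF F2[OF h4(1)]] by (rule ex1E) blast
    have "a = c" using c F1[OF h4(1)] by blast
    moreover have "b = c" using c F1[OF h4(2)] by blast
    ultimately show ?thesis by simp
  qed
  have F5: "\<exists>M. bnd a M" if h5: "HS a y" for a y
  proof -
    obtain F0 where F0: "finite F0" "\<And>B. finite B \<Longrightarrow> B \<inter> F0 = {} \<Longrightarrow> norm (\<Sum>n\<in>B. a n *\<^sub>R f n) < 1"
      using has_sum_cauchyD[of "\<lambda>n. a n *\<^sub>R f n" y 1] h5 unfolding HS_def by auto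
    have "norm (\<Sum>n\<in>A. a n *\<^sub>R f n) \<le> (\<Sum>n\<in>F0. norm (a n *\<^sub>R f n)) + 1" if "finite A" for A
    proof -
      have eq: "(\<Sum>n\<in>A. a n *\<^sub>R f n) = (\<Sum>n\<in>A \<inter> F0. a n *\<^sub>R f n) + (\<Sum>n\<in>A - F0. a n *\<^sub>R f n)"
        by (rule sum.Int_Diff[OF that])
      have "norm (\<Sum>n\<in>A. a n *\<^sub>R f n) \<le> norm (\<Sum>n\<in>A \<inter> F0. a n *\<^sub>R f n) + norm (\<Sum>n\<in>A - F0. a n *\<^sub>R f n)"
        unfolding eq by (rule norm_triangle_ineq)
      moreover have "norm (\<Sum>n\<in>A \<inter> F0. a n *\<^sub>R f n) \<le> (\<Sum>n\<in>A \<inter> F0. norm (a n *\<^sub>R f n))"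
        by (rule norm_sum)
      moreover have "(\<Sum>n\<in>A \<inter> F0. norm (a n *\<^sub>R f n)) \<le> (\<Sum>n\<in>F0. norm (a n *\<^sub>R f n))"
        using F0(1) by (intro sum_mono2) auto
      moreover have "norm (\<Sum>n\<in>A - F0. a n *\<^sub>R f n) < 1" by (rule F0(2)) (use that in auto)
      ultimately show ?thesis by linarith
    qed
    then show ?thesis unfolding bnd_def by blast
  qed
  have F6: "norm y \<le> M" if h6: "HS a y" "bnd a M" for a y M
  proof (rule has_sum_norm_le[where f="\<lambda>n. a n *\<^sub>R f n" and A=UNIV])
    show "((\<lambda>n. a n *\<^sub>R f n) has_sum y) UNIV" using h6(1) unfolding HS_def .
    show "norm (\<Sum>n\<in>F. a n *\<^sub>R f n) \<le> M" if "finite F" "F \<subseteq> UNIV" for F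
      using h6(2) that(1) unfolding bnd_def by blast
  qed
  have HSdiff: "HS (\<lambda>n. a n - b n) (y - z)" if h7: "HS a y" "HS b z" for a b y z
  proof -
    have e: "(\<lambda>n. (a n - b n) *\<^sub>R f n) = (\<lambda>n. a n *\<^sub>R f n - b n *\<^sub>R f n)"
      by (rule ext) (rule scaleR_diff_left)
    show ?thesis unfolding HS_def e
      by (rule has_sum_diff'[OF h7(1)[unfolded HS_def] h7(2)[unfolded HS_def]])
  qed
  have HSscale: "HS (\<lambda>n. c * a n) (c *\<^sub>R y)" if h8: "HS a y" for a y c
  proof -
    have e: "(\<lambda>n. (c * a n) *\<^sub>R f n) = (\<lambda>n. c *\<^sub>R (a n *\<^sub>R f n))"
      by (rule ext) simp
    show ?thesis unfolding HS_def e
      by (rule has_sum_scaleR[OF h8[unfolded HS_def]])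
  qed
  have HS0: "HS (\<lambda>_. 0) 0" unfolding HS_def by simp
  have bnddiff: "bnd (\<lambda>n. a n - b n) (M + N)" if "bnd a M" "bnd b N" for a b M N
    unfolding bnd_def
  proof (intro allI impI)
    fix A :: "nat set" assume "finite A"
    have "(\<Sum>n\<in>A. (a n - b n) *\<^sub>R f n) = (\<Sum>n\<in>A. a n *\<^sub>R f n) - (\<Sum>n\<in>A. b n *\<^sub>R f n)"
      by (simp add: scaleR_diff_left sum_subtractf)
    also have "norm \<dots> \<le> norm (\<Sum>n\<in>A. a n *\<^sub>R f n) + norm (\<Sum>n\<in>A. b n *\<^sub>R f n)"
      by (rule norm_triangle_ineq4)
    also have "\<dots> \<le> M + N" using that \<open>finite A\<close> unfolding bnd_def by (intro add_mono) auto
    finally show "norm (\<Sum>n\<in>A. (a n - b n) *\<^sub>R f n) \<le> M + N" .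
  qed
  have bndscale: "bnd (\<lambda>n. c * a n) (\<bar>c\<bar> * M)" if "bnd a M" for a c M
    unfolding bnd_def
  proof (intro allI impI)
    fix A :: "nat set" assume "finite A"
    have "(\<Sum>n\<in>A. (c * a n) *\<^sub>R f n) = c *\<^sub>R (\<Sum>n\<in>A. a n *\<^sub>R f n)"
      by (simp add: scaleR_sum_right)
    moreover have "norm (\<Sum>n\<in>A. a n *\<^sub>R f n) \<le> M" using that \<open>finite A\<close> unfolding bnd_def by blast
    ultimately show "norm (\<Sum>n\<in>A. (c * a n) *\<^sub>R f n) \<le> \<bar>c\<bar> * M"
      by (simp add: mult_left_mono)
  qed
  have bndmono: "bnd a N" if "bnd a M" "M \<le> N" for a M N
    using that unfolding bnd_def by (blast intro: order_trans)
  have bnd0: "bnd (\<lambda>_. 0) 0" unfolding bnd_def by simp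
  have bndcoef: "\<bar>a n\<bar> \<le> M" if "bnd a M" for a M n
  proof -
    have "norm (\<Sum>n\<in>{n}. a n *\<^sub>R f n) \<le> M" using that unfolding bnd_def by blast
    then show ?thesis by (simp add: nf)
  qed
  have HSadd: "HS (\<lambda>n. a n + b n) (y + z)" if h9: "HS a y" "HS b z" for a b y z
  proof -
    have e: "(\<lambda>n. (a n + b n) *\<^sub>R f n) = (\<lambda>n. a n *\<^sub>R f n + b n *\<^sub>R f n)"
      by (rule ext) (rule scaleR_add_left)
    show ?thesis unfolding HS_def e
      by (rule has_sum_add[OF h9(1)[unfolded HS_def] h9(2)[unfolded HS_def]])
  qed
  have baire: "\<exists>M>0. \<forall>y\<in>Y. \<forall>\<epsilon>>0. \<exists>a z. HS a z \<and> bnd a (M * norm y) \<and> norm (y - z) < \<epsilon>"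
  proof -
    define E where "E m = closure {z. \<exists>a. HS a z \<and> bnd a (real m)}" for m :: nat
    define X where "X = top_of_set Y"
    have EY: "E m \<subseteq> Y" for m unfolding E_def using F2 closedY by (intro closure_minimal) auto
    have Ecl: "closedin X (E m)" for m unfolding X_def by (rule closed_subset[OF EY]) (simp add: E_def)
    have UE: "\<Union>(range E) = Y"
    proof
      show "\<Union>(range E) \<subseteq> Y" using EY by blast
      show "Y \<subseteq> \<Union>(range E)"
      proof
        fix y assume yY: "y \<in> Y"
        obtain a where a: "HS a y" using F3[OF yY] by blast
        obtain M where M: "bnd a M" using F5[OF a] by blast
        obtain m::nat where "M \<le> real m" using real_arch_simple by blast
        then have "bnd a (real m)" using M bndmono by blast
        then have "y \<in> {z. \<exists>a. HS a z \<and> bnd a (real m)}" using a by blast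
        then have "y \<in> E m" unfolding E_def by (rule subsetD[OF closure_subset])
        then show "y \<in> \<Union>(range E)" by blast
      qed
    qed
    have cms: "completely_metrizable_space X" unfolding X_def
      by (rule completely_metrizable_space_closedin[OF completely_metrizable_space_euclidean])
         (simp add: closed_closedin[symmetric] closedY)
    have "\<exists>m. X interior_of E m \<noteq> {}"
    proof (rule ccontr)
      assume "\<not> (\<exists>m. X interior_of E m \<noteq> {})"
      then have "\<And>T. T \<in> range E \<Longrightarrow> closedin X T \<and> X interior_of T = {}" using Ecl by auto
      then have "X interior_of \<Union>(range E) = {}"
        using Baire_category_alt[of X "range E"] cms by auto
      moreover have "X interior_of \<Union>(range E) = Y" unfolding UE X_def
        using interior_of_topspace[of "top_of_set Y"] by simp
      ultimately show False using Y0 by blast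
    qed
    then obtain m y0 where y0: "y0 \<in> X interior_of E m" by blast
    have "openin (top_of_set Y) (X interior_of E m)" unfolding X_def by simp
    then obtain r where r: "r > 0" "ball y0 r \<inter> Y \<subseteq> X interior_of E m"
      using y0 unfolding openin_contains_ball by blast
    have intE: "X interior_of E m \<subseteq> E m" by (rule interior_of_subset)
    have y0E: "y0 \<in> E m" using y0 intE by blast
    have y0Y: "y0 \<in> Y" using y0E EY by blast
    have small: "\<exists>a z. HS a z \<and> bnd a (2 * real m) \<and> norm (y - z) < \<epsilon>"
      if sm: "y \<in> Y" "norm y < r" "\<epsilon> > 0" for y \<epsilon>
    proof -
      have "y0 + y \<in> ball y0 r" using sm(2) by (simp add: dist_norm)
      then have "y0 + y \<in> E m" using r(2) intE Yadd[OF y0Y sm(1)] by blast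
      then obtain z1 where z1: "z1 \<in> {z. \<exists>a. HS a z \<and> bnd a (real m)}" "dist z1 (y0 + y) < \<epsilon>/2"
        unfolding E_def closure_approachable using sm(3) half_gt_zero by blast
      obtain z2 where z2: "z2 \<in> {z. \<exists>a. HS a z \<and> bnd a (real m)}" "dist z2 y0 < \<epsilon>/2"
        using y0E unfolding E_def closure_approachable using sm(3) half_gt_zero by blast
      obtain a1 where a1: "HS a1 z1" "bnd a1 (real m)" using z1(1) by blast
      obtain a2 where a2: "HS a2 z2" "bnd a2 (real m)" using z2(1) by blast
      have "HS (\<lambda>n. a1 n - a2 n) (z1 - z2)" by (rule HSdiff[OF a1(1) a2(1)])
      moreover have "bnd (\<lambda>n. a1 n - a2 n) (2 * real m)" using bnddiff[OF a1(2) a2(2)] by simp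
      moreover have "norm (y - (z1 - z2)) < \<epsilon>"
      proof -
        have eq: "y - (z1 - z2) = (z2 - y0) - (z1 - (y0 + y))" by (simp add: algebra_simps)
        have "norm (y - (z1 - z2)) \<le> norm (z2 - y0) + norm (z1 - (y0 + y))"
          unfolding eq by (rule norm_triangle_ineq4)
        then show ?thesis using z1(2) z2(2) by (simp add: dist_norm)
      qed
      ultimately show ?thesis by blast
    qed
    define M where "M = 4 * (real m + 1) / r"
    have Mpos: "M > 0" using r by (simp add: M_def)
    have main: "\<exists>a z. HS a z \<and> bnd a (M * norm y) \<and> norm (y - z) < \<epsilon>" if yY: "y \<in> Y" and ep: "\<epsilon> > 0" for y \<epsilon>
    proof (cases "y = 0")
      case True then show ?thesis using HS0 bnd0 ep by (intro exI[of _ "\<lambda>_. 0"] exI[of _ 0]) simp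
    next
      case False
      define t where "t = r / (2 * norm y)"
      have t: "t > 0" using False r by (simp add: t_def)
      have nty: "norm (t *\<^sub>R y) = r / 2" using False t r unfolding t_def by simp
      then have "norm (t *\<^sub>R y) < r" using r by simp
      then obtain a' z' where a': "HS a' z'" "bnd a' (2 * real m)" "norm (t *\<^sub>R y - z') < \<epsilon> * t"
        using small[OF Yscale[OF yY]] t ep by (meson mult_pos_pos)
      have "HS (\<lambda>n. (1/t) * a' n) ((1/t) *\<^sub>R z')" by (rule HSscale[OF a'(1)])
      moreover have "bnd (\<lambda>n. (1/t) * a' n) (M * norm y)"
      proof (rule bndmono[OF bndscale[OF a'(2)]])
        have "\<bar>1/t\<bar> * (2 * real m) = 4 * real m / r * norm y"
          using t False r unfolding t_def by (simp add: field_simps)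
        also have "\<dots> \<le> M * norm y" unfolding M_def using r
          by (intro mult_right_mono divide_right_mono) auto
        finally show "\<bar>1/t\<bar> * (2 * real m) \<le> M * norm y" .
      qed
      moreover have "norm (y - (1/t) *\<^sub>R z') < \<epsilon>"
      proof -
        have "y - (1/t) *\<^sub>R z' = (1/t) *\<^sub>R (t *\<^sub>R y - z')" using t by (simp add: algebra_simps)
        then have "norm (y - (1/t) *\<^sub>R z') = (1/t) * norm (t *\<^sub>R y - z')" using t by simp
        also have "\<dots> < (1/t) * (\<epsilon> * t)" using a'(3) t by (intro mult_strict_left_mono) auto
        also have "\<dots> = \<epsilon>" using t by simp
        finally show ?thesis .
      qed
      ultimately show ?thesis by blast
    qed
    show ?thesis using Mpos main by blast
  qed
  obtain M where Mpos: "M > 0"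
    and M: "\<And>y \<epsilon>. y \<in> Y \<Longrightarrow> \<epsilon> > 0 \<Longrightarrow> \<exists>a z. HS a z \<and> bnd a (M * norm y) \<and> norm (y - z) < \<epsilon>"
    using baire by blast
  have step: "\<exists>a z. HS a z \<and> bnd a (M * norm y) \<and> norm (y - z) \<le> norm y / 2" if yY: "y \<in> Y" for y
  proof (cases "y = 0")
    case True then show ?thesis using HS0 bnd0 by (intro exI[of _ "\<lambda>_. 0"] exI[of _ 0]) simp
  next
    case False
    then have "norm y / 2 > 0" by simp
    then obtain a z where "HS a z" "bnd a (M * norm y)" "norm (y - z) < norm y / 2" using M[OF yY] by blast
    then show ?thesis by (intro exI[of _ a] exI[of _ z]) simp
  qed
  have "\<forall>y. \<exists>p. y \<in> Y \<longrightarrow> HS (fst p) (snd p) \<and> bnd (fst p) (M * norm y) \<and> norm (y - snd p) \<le> norm y / 2"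
    using step by fastforce
  then obtain P where P: "\<And>y. y \<in> Y \<Longrightarrow> HS (fst (P y)) (snd (P y)) \<and> bnd (fst (P y)) (M * norm y) \<and> norm (y - snd (P y)) \<le> norm y / 2"
    by metis
  define Af where "Af y = fst (P y)" for y
  define Zf where "Zf y = snd (P y)" for y
  have AZ1: "HS (Af y) (Zf y)" and AZ2: "bnd (Af y) (M * norm y)" and AZ3: "norm (y - Zf y) \<le> norm y / 2"
    if "y \<in> Y" for y using P[OF that] unfolding Af_def Zf_def by auto
  have iter: "\<exists>a. HS a y \<and> bnd a (2 * (M * norm y))" if yY: "y \<in> Y" for y
  proof -
    define r where "r = rec_nat y (\<lambda>_ w. w - Zf w)"
    have r0: "r 0 = y" and rS: "r (Suc k) = r k - Zf (r k)" for k by (simp_all add: r_def)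
    have rY: "r k \<in> Y \<and> norm (r k) \<le> norm y / 2^k" for k
    proof (induction k)
      case 0 then show ?case using yY r0 by simp
    next
      case (Suc k)
      then have rk: "r k \<in> Y" "norm (r k) \<le> norm y / 2^k" by auto
      have "r (Suc k) \<in> Y" unfolding rS by (rule Ydiff[OF rk(1) F2[OF AZ1[OF rk(1)]]])
      moreover have "norm (r (Suc k)) \<le> norm y / 2^(Suc k)"
      proof -
        have "norm (r (Suc k)) \<le> norm (r k) / 2" unfolding rS using AZ3[OF rk(1)] by simp
        also have "\<dots> \<le> (norm y / 2^k) / 2" using rk(2) by simp
        also have "\<dots> = norm y / 2^(Suc k)" by simp
        finally show ?thesis .
      qed
      ultimately show ?case by blast
    qed
    define b where "b k = Af (r k)" for k
    define w where "w k = Zf (r k)" for k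
    define B where "B = M * norm y"
    have Bnn: "B \<ge> 0" using Mpos unfolding B_def by simp
    have hb: "HS (b k) (w k)" for k unfolding b_def w_def using AZ1 rY by blast
    have bb: "bnd (b k) (B / 2^k)" for k
    proof (rule bndmono)
      show "bnd (b k) (M * norm (r k))" unfolding b_def using AZ2 rY by blast
      show "M * norm (r k) \<le> B / 2^k" unfolding B_def using rY[of k] Mpos
        by (simp add: mult_left_mono divide_inverse mult.assoc)
    qed
    define a where "a n = (\<Sum>k. b k n)" for n
    have sb: "summable (\<lambda>k. b k n)" for n
      by (rule geom_bound(1)) (use bndcoef[OF bb] in simp)
    define W where "W A k = (\<Sum>n\<in>A. b k n *\<^sub>R f n)" for A k
    have Wb: "norm (W A k) \<le> B / 2^k" if "finite A" for A k
      using bb[of k] that unfolding W_def bnd_def by blast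
    have sumA: "(\<Sum>n\<in>A. a n *\<^sub>R f n) = suminf (W A)" if "finite A" for A
    proof -
      have "(\<Sum>n\<in>A. a n *\<^sub>R f n) = (\<Sum>n\<in>A. \<Sum>k. b k n *\<^sub>R f n)"
        unfolding a_def by (intro sum.cong refl suminf_scaleR_left sb)
      also have "\<dots> = (\<Sum>k. \<Sum>n\<in>A. b k n *\<^sub>R f n)"
        by (rule suminf_sum[symmetric]) (intro summable_scaleR_left sb)
      finally show ?thesis unfolding W_def by simp
    qed
    have tail: "norm ((\<Sum>n\<in>A. a n *\<^sub>R f n) - (\<Sum>k<K. W A k)) \<le> 2 * (B / 2^K)" if fA: "finite A" for A K
    proof -
      have sW: "summable (W A)" by (rule geom_bound(1)) (rule Wb[OF fA])
      have "(\<Sum>n\<in>A. a n *\<^sub>R f n) - (\<Sum>k<K. W A k) = (\<Sum>j. W A (j + K))"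
        unfolding sumA[OF fA] by (rule suminf_minus_initial_segment[OF sW, symmetric])
      also have "norm \<dots> \<le> 2 * (B / 2^K)"
      proof (rule geom_bound(2))
        fix j
        have "norm (W A (j + K)) \<le> B / 2^(j+K)" by (rule Wb[OF fA])
        also have "\<dots> = (B / 2^K) / 2^j" by (simp add: power_add field_simps)
        finally show "norm (W A (j + K)) \<le> (B / 2^K) / 2^j" .
      qed
      finally show ?thesis .
    qed
    define c where "c K n = (\<Sum>k<K. b k n)" for K n
    have hc: "HS (c K) (\<Sum>k<K. w k)" for K
    proof (induction K)
      case 0 then show ?case using HS0 unfolding c_def by simp
    next
      case (Suc K)
      have "HS (\<lambda>n. c K n + b K n) ((\<Sum>k<K. w k) + w K)" by (rule HSadd[OF Suc hb])
      then show ?case unfolding c_def by simp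
    qed
    have Wc: "(\<Sum>n\<in>A. c K n *\<^sub>R f n) = (\<Sum>k<K. W A k)" for A K
      unfolding c_def W_def by (simp add: scaleR_sum_left sum.swap[of _ A])
    have bnd_tail: "bnd (\<lambda>n. a n - c K n) (2 * (B / 2^K))" for K
      unfolding bnd_def
    proof (intro allI impI)
      fix A :: "nat set" assume fA: "finite A"
      have "(\<Sum>n\<in>A. (a n - c K n) *\<^sub>R f n) = (\<Sum>n\<in>A. a n *\<^sub>R f n) - (\<Sum>k<K. W A k)"
        unfolding Wc[symmetric] by (simp add: scaleR_diff_left sum_subtractf)
      then show "norm (\<Sum>n\<in>A. (a n - c K n) *\<^sub>R f n) \<le> 2 * (B / 2^K)" using tail[OF fA] by simp
    qed
    have sa: "(\<lambda>n. a n *\<^sub>R f n) summable_on UNIV"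
    proof (rule summable_on_cauchyI)
      fix e :: real assume e: "e > 0"
      obtain K where K: "4 * B / e < 2^K" using real_arch_pow[of 2 "4 * B / e"] by auto
      have Kb: "2 * (B / 2^K) < e / 2"
      proof -
        have "4 * B < e * 2^K" using K e by (simp add: field_simps)
        then show ?thesis by (simp add: field_simps)
      qed
      obtain F0 where F0: "finite F0" "\<forall>B'. finite B' \<and> B' \<inter> F0 = {} \<longrightarrow> norm (\<Sum>n\<in>B'. c K n *\<^sub>R f n) < e / 2"
        using has_sum_cauchyD[OF hc[of K, unfolded HS_def], of "e/2"] e by auto
      have "norm (\<Sum>n\<in>B'. a n *\<^sub>R f n) < e" if B': "finite B'" "B' \<inter> F0 = {}" for B'
      proof -
        have eq: "(\<Sum>n\<in>B'. a n *\<^sub>R f n) = (\<Sum>n\<in>B'. c K n *\<^sub>R f n) + (\<Sum>n\<in>B'. (a n - c K n) *\<^sub>R f n)"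
          by (simp add: scaleR_diff_left sum_subtractf)
        have "norm (\<Sum>n\<in>B'. a n *\<^sub>R f n) \<le> norm (\<Sum>n\<in>B'. c K n *\<^sub>R f n) + norm (\<Sum>n\<in>B'. (a n - c K n) *\<^sub>R f n)"
          unfolding eq by (rule norm_triangle_ineq)
        moreover have "norm (\<Sum>n\<in>B'. c K n *\<^sub>R f n) < e / 2" using F0(2) B' by blast
        moreover have "norm (\<Sum>n\<in>B'. (a n - c K n) *\<^sub>R f n) \<le> 2 * (B / 2^K)"
          using bnd_tail[of K] B'(1) unfolding bnd_def by blast
        ultimately show ?thesis using Kb by linarith
      qed
      then show "\<exists>F0. finite F0 \<and> (\<forall>B'. finite B' \<and> B' \<inter> F0 = {} \<longrightarrow> norm (\<Sum>n\<in>B'. a n *\<^sub>R f n) < e)"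
        using F0(1) by blast
    qed
    define z where "z = infsum (\<lambda>n. a n *\<^sub>R f n) UNIV"
    have hz: "HS a z" unfolding HS_def z_def using sa by simp
    have wsum: "(\<Sum>k<K. w k) = y - r K" for K
    proof (induction K)
      case 0 then show ?case using r0 by simp
    next
      case (Suc K) then show ?case unfolding w_def by (simp add: rS)
    qed
    have zK: "norm (z - y) \<le> (2 * B + norm y) / 2^K" for K
    proof -
      have "norm (z - (\<Sum>k<K. w k)) \<le> 2 * (B / 2^K)"
        by (rule F6[OF HSdiff[OF hz hc[of K]] bnd_tail[of K]])
      then have "norm (z - (y - r K)) \<le> 2 * (B / 2^K)" unfolding wsum .
      moreover have "norm (z - y) \<le> norm (z - (y - r K)) + norm (r K)"
        using norm_triangle_ineq4[of "z - (y - r K)" "r K"] by simp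
      moreover have "norm (r K) \<le> norm y / 2^K" using rY by blast
      ultimately have "norm (z - y) \<le> 2 * (B / 2^K) + norm y / 2^K" by linarith
      then show ?thesis by (simp add: add_divide_distrib)
    qed
    have "z = y"
    proof (rule ccontr)
      assume "z \<noteq> y"
      then have pos: "norm (z - y) > 0" by simp
      obtain K where K: "(2 * B + norm y) / norm (z - y) < 2^K"
        using real_arch_pow[of 2 "(2 * B + norm y) / norm (z - y)"] by auto
      then have "2 * B + norm y < norm (z - y) * 2^K" using pos by (simp add: field_simps)
      moreover have "norm (z - y) * 2^K \<le> 2 * B + norm y" using zK[of K] by (simp add: field_simps)
      ultimately show False by simp
    qed
    moreover have "bnd a (2 * B)"
      unfolding bnd_def using tail[of _ 0] by simp
    ultimately show ?thesis using hz unfolding B_def by blast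
  qed
  show ?thesis
  proof (intro exI[of _ "2 * M"] conjI allI impI)
    show "0 \<le> 2 * M" using Mpos by simp
    fix S A :: "nat set" and d :: "nat \<Rightarrow> real" assume fS: "finite S" and AS: "A \<subseteq> S"
    define bb where "bb n = (if n \<in> S then d n else 0)" for n
    define y where "y = (\<Sum>n\<in>S. d n *\<^sub>R f n)"
    have "((\<lambda>n. bb n *\<^sub>R f n) has_sum y) S"
      unfolding y_def using fS by (intro has_sum_finiteI) (simp_all add: bb_def)
    then have hbb: "HS bb y" unfolding HS_def
      by (subst (asm) has_sum_cong_neutral[where T=UNIV and g="\<lambda>n. bb n *\<^sub>R f n"]) (auto simp: bb_def)
    obtain a where a: "HS a y" "bnd a (2 * (M * norm y))" using iter[OF F2[OF hbb]] by blast
    have "a = bb" by (rule F4[OF a(1) hbb])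
    then have "norm (\<Sum>n\<in>A. bb n *\<^sub>R f n) \<le> 2 * M * norm y"
      using a(2) finite_subset[OF AS fS] unfolding bnd_def by (simp add: mult.assoc)
    moreover have "(\<Sum>n\<in>A. bb n *\<^sub>R f n) = (\<Sum>n\<in>A. d n *\<^sub>R f n)"
      using AS unfolding bb_def by (intro sum.cong) auto
    ultimately show "norm (\<Sum>n\<in>A. d n *\<^sub>R f n) \<le> 2 * M * norm (\<Sum>n\<in>S. d n *\<^sub>R f n)"
      unfolding y_def by simp
  qed
qed



lemma span_range_rep:
  fixes g :: "nat \<Rightarrow> 'a::real_normed_vector"
  assumes "y \<in> span (range g)"
  shows "\<exists>c N. (\<forall>n\<ge>N. c n = 0) \<and> y = (\<Sum>n<N. c n *\<^sub>R g n)"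
  using assms
proof (induction rule: span_induct_alt)
  case base
  then show ?case by (intro exI[of _ "\<lambda>_. 0"] exI[of _ 0]) auto
next
  case (step c x y)
  then obtain m where m: "x = g m" by auto
  from step obtain d N where d: "\<forall>n\<ge>N. d n = 0" "y = (\<Sum>n<N. d n *\<^sub>R g n)" by auto
  define N' where "N' = max N (Suc m)"
  define d' where "d' = (\<lambda>n. d n + (if n = m then c else 0))"
  have "y = (\<Sum>n<N'. d n *\<^sub>R g n)"
    unfolding d(2) N'_def by (rule sum.mono_neutral_left) (use d(1) in auto)
  moreover have "(\<Sum>n<N'. (if n = m then c else 0) *\<^sub>R g n) = (\<Sum>n<N'. if n = m then c *\<^sub>R g m else 0)"
    by (rule sum.cong) auto
  moreover have "(\<Sum>n<N'. if n = m then c *\<^sub>R g m else 0) = c *\<^sub>R g m"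
    unfolding N'_def by (simp add: sum.delta less_max_iff_disj)
  ultimately have "c *\<^sub>R x + y = (\<Sum>n<N'. d' n *\<^sub>R g n)"
    unfolding d'_def m by (simp add: scaleR_add_left sum.distrib)
  moreover have "\<forall>n\<ge>N'. d' n = 0" using d(1) unfolding d'_def N'_def by auto
  ultimately show ?case by blast
qed

lemma supp_imp_unconditional_basic:
  fixes g :: "nat \<Rightarrow> 'a::banach"
  assumes ng: "\<And>n. norm (g n) = 1" and C: "C \<ge> 0"
    and supp: "\<And>S A d. finite S \<Longrightarrow> A \<subseteq> S \<Longrightarrow>
                  norm (\<Sum>n\<in>A. d n *\<^sub>R g n) \<le> C * norm (\<Sum>n\<in>S. d n *\<^sub>R g n)"
  shows "unconditional_basic g"
proof -
  have coef: "\<bar>d m\<bar> \<le> C * norm (\<Sum>n\<in>S. d n *\<^sub>R g n)" if "finite S" "m \<in> S" for S d m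
    using supp[of S "{m}" d] that ng by simp
  have uniq: "a = b" if "(\<lambda>n. a n *\<^sub>R g n) sums x" "(\<lambda>n. b n *\<^sub>R g n) sums x" for a b x
  proof
    fix m
    have "(\<lambda>n. (a n - b n) *\<^sub>R g n) sums (x - x)"
      using sums_diff[OF that] by (simp add: scaleR_diff_left)
    then have lim: "(\<lambda>N. \<Sum>n<N. (a n - b n) *\<^sub>R g n) \<longlonglongrightarrow> 0" by (simp add: sums_def)
    have "(\<lambda>N. C * norm (\<Sum>n<N. (a n - b n) *\<^sub>R g n)) \<longlonglongrightarrow> C * norm (0::'a)"
      by (intro tendsto_intros lim)
    moreover have "\<forall>N\<ge>Suc m. \<bar>a m - b m\<bar> \<le> C * norm (\<Sum>n<N. (a n - b n) *\<^sub>R g n)"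
      using coef[of "{..<_}" m "\<lambda>n. a n - b n"] by auto
    ultimately have "\<bar>a m - b m\<bar> \<le> C * norm (0::'a)"
      by (intro LIMSEQ_le_const) auto
    then show "a m = b m" by simp
  qed
  have exist: "\<exists>a. (\<lambda>n. a n *\<^sub>R g n) sums x" if x: "x \<in> closure (span (range g))" for x
  proof -
    obtain y where y: "\<And>k. y k \<in> span (range g)" "y \<longlonglongrightarrow> x"
      using x closure_sequential by blast
    have "\<forall>k. \<exists>c N. (\<forall>n\<ge>N. c n = 0) \<and> y k = (\<Sum>n<N. c n *\<^sub>R g n)"
      using span_range_rep y(1) by blast
    then obtain c NN where cN: "\<And>k. \<forall>n\<ge>NN k. c k n = 0" "\<And>k. y k = (\<Sum>n<NN k. c k n *\<^sub>R g n)"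
      by metis
    have yN: "y k = (\<Sum>n<N. c k n *\<^sub>R g n)" if "N \<ge> NN k" for k N
      unfolding cN(2) by (rule sum.mono_neutral_left) (use cN(1) that in auto)
    have diffb: "norm (\<Sum>n<N. (c k n - c k' n) *\<^sub>R g n) \<le> C * norm (y k - y k')" for k k' N
    proof -
      define M where "M = max N (max (NN k) (NN k'))"
      have "y k - y k' = (\<Sum>n<M. (c k n - c k' n) *\<^sub>R g n)"
        using yN[of k M] yN[of k' M] unfolding M_def by (simp add: scaleR_diff_left sum_subtractf)
      then show ?thesis using supp[of "{..<M}" "{..<N}" "\<lambda>n. c k n - c k' n"] unfolding M_def by auto
    qed
    have coefb: "\<bar>c k m - c k' m\<bar> \<le> C * norm (y k - y k')" for k k' m
    proof -
      define M where "M = max (Suc m) (max (NN k) (NN k'))"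
      have "y k - y k' = (\<Sum>n<M. (c k n - c k' n) *\<^sub>R g n)"
        using yN[of k M] yN[of k' M] unfolding M_def by (simp add: scaleR_diff_left sum_subtractf)
      then show ?thesis using coef[of "{..<M}" m "\<lambda>n. c k n - c k' n"] unfolding M_def by auto
    qed
    have cy: "Cauchy y" using y(2) by (rule LIMSEQ_imp_Cauchy)
    have "convergent (\<lambda>k. c k m)" for m
    proof -
      have "Cauchy (\<lambda>k. c k m)"
        unfolding Cauchy_iff
      proof (intro allI impI)
        fix e :: real assume "e > 0"
        then obtain M where M: "\<forall>k\<ge>M. \<forall>k'\<ge>M. norm (y k - y k') < e / (C + 1)"
        proof -
          have "e / (C + 1) > 0" using C \<open>e > 0\<close> by simp
          then show ?thesis using that cy unfolding Cauchy_iff by blast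
        qed
        have "norm (c k m - c k' m) < e" if "k \<ge> M" "k' \<ge> M" for k k'
        proof -
          have "norm (c k m - c k' m) \<le> C * norm (y k - y k')" using coefb by simp
          also have "\<dots> \<le> C * (e / (C + 1))" using M that C by (intro mult_left_mono) (auto simp: less_imp_le)
          also have "\<dots> < e" using C \<open>e > 0\<close> by (simp add: field_simps)
          finally show ?thesis .
        qed
        then show "\<exists>M. \<forall>k\<ge>M. \<forall>k'\<ge>M. norm (c k m - c k' m) < e" by blast
      qed
      then show ?thesis by (simp add: Cauchy_convergent_iff)
    qed
    then obtain a where a: "\<And>m. (\<lambda>k. c k m) \<longlonglongrightarrow> a m"
      unfolding convergent_def by metis
    have "(\<lambda>n. a n *\<^sub>R g n) sums x"
      unfolding sums_def LIMSEQ_iff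
    proof (intro allI impI)
      fix r :: real assume "r > 0"
      define \<delta> where "\<delta> = r / (2 * C + 2)"
      have "\<delta> > 0" using \<open>r > 0\<close> C unfolding \<delta>_def by auto
      then obtain k0 where k0: "\<And>k. k \<ge> k0 \<Longrightarrow> norm (y k - x) < \<delta>"
        using y(2) unfolding LIMSEQ_iff by blast
      have "norm ((\<Sum>n<N. a n *\<^sub>R g n) - x) < r" if "N \<ge> NN k0" for N
      proof -
        have lim: "(\<lambda>k. (\<Sum>n<N. c k n *\<^sub>R g n)) \<longlonglongrightarrow> (\<Sum>n<N. a n *\<^sub>R g n)"
          by (intro tendsto_intros a)
        have "norm ((\<Sum>n<N. c k n *\<^sub>R g n) - y k0) \<le> 2 * C * \<delta>" if "k \<ge> k0" for k
        proof -
          have "(\<Sum>n<N. c k n *\<^sub>R g n) - y k0 = (\<Sum>n<N. (c k n - c k0 n) *\<^sub>R g n)"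
            using yN[OF \<open>N \<ge> NN k0\<close>] by (simp add: scaleR_diff_left sum_subtractf)
          also have "norm \<dots> \<le> C * norm (y k - y k0)" by (rule diffb)
          also have "\<dots> \<le> C * (2 * \<delta>)"
          proof (intro mult_left_mono C)
            have "norm (y k - y k0) \<le> norm (y k - x) + norm (y k0 - x)" using norm_triangle_ineq4[of "y k - x" "y k0 - x"] by simp
            then show "norm (y k - y k0) \<le> 2 * \<delta>" using k0[OF that] k0[of k0] by simp
          qed
          finally show ?thesis by simp
        qed
        then have "norm ((\<Sum>n<N. a n *\<^sub>R g n) - y k0) \<le> 2 * C * \<delta>"
          by (intro LIMSEQ_le_const2[OF tendsto_norm[OF tendsto_diff[OF lim tendsto_const]]]) auto
        moreover have "norm ((\<Sum>n<N. a n *\<^sub>R g n) - x) \<le> norm ((\<Sum>n<N. a n *\<^sub>R g n) - y k0) + norm (y k0 - x)"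
          by (rule norm_diff_triangle_le[of _ "y k0"]) simp_all
        moreover have "norm (y k0 - x) < \<delta>" using k0 by simp
        moreover have "2 * C * \<delta> + \<delta> < r"
        proof -
          have "(2 * C + 2) * \<delta> = r" using C unfolding \<delta>_def by simp
          then show ?thesis using \<open>\<delta> > 0\<close> by (simp add: algebra_simps)
        qed
        ultimately show ?thesis by linarith
      qed
      then show "\<exists>no. \<forall>N\<ge>no. norm ((\<Sum>n<N. a n *\<^sub>R g n) - x) < r" by blast
    qed
    then show ?thesis by blast
  qed
  have uncond: "(\<lambda>n. a n *\<^sub>R g n) summable_on UNIV" if sa: "summable (\<lambda>n. a n *\<^sub>R g n)" for a
  proof (rule summable_on_cauchyI)
    fix e :: real assume "e > 0"
    then have "e / (C + 1) > 0" using C by auto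
    then obtain N where N: "\<And>m n. m \<ge> N \<Longrightarrow> norm (\<Sum>k\<in>{m..<n}. a k *\<^sub>R g k) < e / (C + 1)"
      using sa unfolding summable_Cauchy by blast
    have "norm (\<Sum>n\<in>B. a n *\<^sub>R g n) < e" if B: "finite B" "B \<inter> {..<N} = {}" for B
    proof (cases "B = {}")
      case True then show ?thesis using \<open>e > 0\<close> by simp
    next
      case False
      define M where "M = Suc (Max B)"
      have sub: "B \<subseteq> {N..<M}" using B False unfolding M_def
        by (auto simp: le_imp_less_Suc Max_ge)
      have "norm (\<Sum>n\<in>B. a n *\<^sub>R g n) \<le> C * norm (\<Sum>n\<in>{N..<M}. a n *\<^sub>R g n)"
        by (rule supp[OF _ sub]) simp
      also have "\<dots> \<le> C * (e / (C + 1))" using N[of N M] C by (intro mult_left_mono) auto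
      also have "\<dots> < e" using C \<open>e > 0\<close> by (simp add: field_simps)
      finally show ?thesis .
    qed
    then show "\<exists>F0. finite F0 \<and> (\<forall>B. finite B \<and> B \<inter> F0 = {} \<longrightarrow> norm (\<Sum>n\<in>B. a n *\<^sub>R g n) < e)"
      by (intro exI[of _ "{..<N}"]) auto
  qed
  show ?thesis
    unfolding unconditional_basic_def schauder_basic_def
    using exist uniq uncond by blast
qed



lemma lemA2:
  fixes f :: "nat \<Rightarrow> 'a::real_normed_vector"
  assumes supp: "\<And>S A d. finite S \<Longrightarrow> A \<subseteq> S \<Longrightarrow>
                  norm (\<Sum>n\<in>A. d n *\<^sub>R f n) \<le> K * norm (\<Sum>n\<in>S. d n *\<^sub>R f n)"
    and fJ: "finite J" and ip: "inj_on p J" and iq: "inj_on q J" and dj: "p ` J \<inter> q ` J = {}"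
  shows "norm (\<Sum>j\<in>J. \<alpha> j *\<^sub>R f (p j)) \<le> K * norm (\<Sum>j\<in>J. (\<alpha> j *\<^sub>R f (p j) - \<alpha> j *\<^sub>R f (q j)))"
proof -
  define d where "d n = (if n \<in> p ` J then \<alpha> (inv_into J p n) else - \<alpha> (inv_into J q n))" for n
  have s1: "(\<Sum>n\<in>p ` J. d n *\<^sub>R f n) = (\<Sum>j\<in>J. \<alpha> j *\<^sub>R f (p j))"
    by (simp add: sum.reindex[OF ip] d_def inv_into_f_f[OF ip])
  have s2: "(\<Sum>n\<in>q ` J. d n *\<^sub>R f n) = (\<Sum>j\<in>J. - (\<alpha> j *\<^sub>R f (q j)))"
  proof -
    have "(\<Sum>n\<in>q ` J. d n *\<^sub>R f n) = (\<Sum>j\<in>J. d (q j) *\<^sub>R f (q j))" by (simp add: sum.reindex[OF iq])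
    also have "\<dots> = (\<Sum>j\<in>J. - (\<alpha> j *\<^sub>R f (q j)))"
    proof (rule sum.cong[OF refl])
      fix j assume "j \<in> J"
      then have "q j \<notin> p ` J" using dj by blast
      then show "d (q j) *\<^sub>R f (q j) = - (\<alpha> j *\<^sub>R f (q j))"
        unfolding d_def using inv_into_f_f[OF iq \<open>j \<in> J\<close>] by simp
    qed
    finally show ?thesis .
  qed
  have "(\<Sum>n\<in>p ` J \<union> q ` J. d n *\<^sub>R f n) = (\<Sum>n\<in>p ` J. d n *\<^sub>R f n) + (\<Sum>n\<in>q ` J. d n *\<^sub>R f n)"
    using fJ dj by (intro sum.union_disjoint) auto
  also have "\<dots> = (\<Sum>j\<in>J. (\<alpha> j *\<^sub>R f (p j) - \<alpha> j *\<^sub>R f (q j)))"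
    unfolding s1 s2 by (simp add: sum_subtractf sum_negf)
  finally have eq: "(\<Sum>n\<in>p ` J \<union> q ` J. d n *\<^sub>R f n) = (\<Sum>j\<in>J. (\<alpha> j *\<^sub>R f (p j) - \<alpha> j *\<^sub>R f (q j)))" .
  show ?thesis
    using supp[of "p ` J \<union> q ` J" "p ` J" d] fJ unfolding s1 eq by auto
qed

lemma plegma_lin:
  assumes "i0 < l"
  shows "plegma_family l k (\<lambda>i j. (l + 1) * j + i)"
    and "plegma_family l k (\<lambda>i j. if i = i0 then (l + 1) * j + i + 1 else (l + 1) * j + i)"
proof -
  have key: "(l + 1) * j1 + x < (l + 1) * j2 + y" if "j1 < j2" "x \<le> l" for j1 j2 x y
  proof -
    have "(l + 1) * j1 + x < (l + 1) * j1 + (l + 1)" using that by simp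
    also have "\<dots> = (l + 1) * (j1 + 1)" by simp
    also have "\<dots> \<le> (l + 1) * j2" using that by (intro mult_left_mono) auto
    finally show ?thesis by simp
  qed
  show "plegma_family l k (\<lambda>i j. (l + 1) * j + i)"
    unfolding plegma_family_def strict_mono_on_def
  proof (intro conjI allI impI)
    fix i r s assume "i < l" "r \<in> {..<k} \<and> s \<in> {..<k} \<and> r < s"
    then show "(l + 1) * r + i < (l + 1) * s + i" by (intro key) auto
  next
    fix j1 j2 i1 i2 assume "j1 < j2 \<and> j2 < k \<and> i1 < l \<and> i2 < l"
    then show "(l + 1) * j1 + i1 < (l + 1) * j2 + i2" by (intro key) auto
  next
    fix i1 i2 j assume "i1 < i2 \<and> i2 < l \<and> j < k"
    then show "(l + 1) * j + i1 \<le> (l + 1) * j + i2" by simp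
  qed
  show "plegma_family l k (\<lambda>i j. if i = i0 then (l + 1) * j + i + 1 else (l + 1) * j + i)"
    unfolding plegma_family_def strict_mono_on_def
  proof (intro conjI allI impI)
    fix i r s assume "i < l" "r \<in> {..<k} \<and> s \<in> {..<k} \<and> r < s"
    then show "(if i = i0 then (l + 1) * r + i + 1 else (l + 1) * r + i)
             < (if i = i0 then (l + 1) * s + i + 1 else (l + 1) * s + i)"
      using key[of r s "i + 1" "i + 1"] key[of r s i i] by (auto simp: add.assoc)
  next
    fix j1 j2 i1 i2 assume "j1 < j2 \<and> j2 < k \<and> i1 < l \<and> i2 < l"
    then show "(if i1 = i0 then (l + 1) * j1 + i1 + 1 else (l + 1) * j1 + i1)
             < (if i2 = i0 then (l + 1) * j2 + i2 + 1 else (l + 1) * j2 + i2)"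
      using key[of j1 j2 "i1 + 1" "i2 + 1"] key[of j1 j2 i1 "i2 + 1"] key[of j1 j2 "i1 + 1" i2]
        key[of j1 j2 i1 i2] by (auto simp: add.assoc)
  next
    fix i1 i2 j assume "i1 < i2 \<and> i2 < l \<and> j < k"
    then show "(if i1 = i0 then (l + 1) * j + i1 + 1 else (l + 1) * j + i1)
             \<le> (if i2 = i0 then (l + 1) * j + i2 + 1 else (l + 1) * j + i2)" by auto
  qed
qed

lemma row_bound:
  fixes e :: "nat \<Rightarrow> nat \<Rightarrow> 'a::real_normed_vector"
  assumes sp: "plegma_spreading l e" and i0: "i0 < l"
    and rs: "\<And>S A d. finite S \<Longrightarrow> A \<subseteq> S \<Longrightarrow>
              norm (\<Sum>n\<in>A. d n *\<^sub>R e i0 n) \<le> K * norm (\<Sum>n\<in>S. d n *\<^sub>R e i0 n)"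
    and fF: "finite F" and Fl: "F \<subseteq> {..<l} \<times> UNIV" and K: "K \<ge> 0"
  shows "norm (\<Sum>j\<in>{j. (i0,j) \<in> F}. c i0 j *\<^sub>R e i0 j) \<le> K * (2 * norm (\<Sum>(i,j)\<in>F. c i j *\<^sub>R e i j))"
proof -
  have spr: "\<And>k s F a. plegma_family l k s \<Longrightarrow> F \<subseteq> {..<l} \<times> {..<k} \<Longrightarrow>
      norm (\<Sum>(i,j)\<in>F. a i j *\<^sub>R e i j) = norm (\<Sum>(i,j)\<in>F. a i j *\<^sub>R e i (s i j))"
  proof -
    have "\<forall>k s F a. plegma_family l k s \<and> F \<subseteq> {..<l} \<times> {..<k} \<longrightarrow>
      norm (\<Sum>(i,j)\<in>F. a i j *\<^sub>R e i j) = norm (\<Sum>(i,j)\<in>F. a i j *\<^sub>R e i (s i j))"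
      using sp unfolding plegma_spreading_def by (rule conjunct2)
    then show "\<And>k s F a. plegma_family l k s \<Longrightarrow> F \<subseteq> {..<l} \<times> {..<k} \<Longrightarrow>
      norm (\<Sum>(i,j)\<in>F. a i j *\<^sub>R e i j) = norm (\<Sum>(i,j)\<in>F. a i j *\<^sub>R e i (s i j))" by blast
  qed
  obtain k where k: "snd ` F \<subseteq> {..<k}" using finite_nat_bounded[OF finite_imageI[OF fF]] by blast
  have Fk: "F \<subseteq> {..<l} \<times> {..<k}"
  proof
    fix p assume pF: "p \<in> F"
    then have "fst p < l" using Fl by auto
    moreover have "snd p < k" using k pF by auto
    ultimately show "p \<in> {..<l} \<times> {..<k}" by (cases p) auto
  qed
  define L where "L = l + 1"
  define sA where "sA i j = L * j + i" for i j :: nat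
  define sB where "sB i j = (if i = i0 then L * j + i + 1 else L * j + i)" for i j :: nat
  have pA: "plegma_family l k sA" unfolding sA_def L_def by (rule plegma_lin(1)[OF i0])
  have pB: "plegma_family l k sB" unfolding sB_def L_def by (rule plegma_lin(2)[OF i0])
  define J where "J = {j. (i0, j) \<in> F}"
  have "J \<subseteq> snd ` F" unfolding J_def by (auto intro: rev_image_eqI)
  then have fJ: "finite J" using finite_subset finite_imageI[OF fF] by blast
  have F0eq: "{p \<in> F. fst p = i0} = (\<lambda>j. (i0, j)) ` J"
  proof (intro equalityI subsetI)
    fix p assume "p \<in> {p \<in> F. fst p = i0}"
    then show "p \<in> (\<lambda>j. (i0, j)) ` J" unfolding J_def by (cases p) auto
  next
    fix p assume "p \<in> (\<lambda>j. (i0, j)) ` J"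
    then show "p \<in> {p \<in> F. fst p = i0}" unfolding J_def by auto
  qed
  have injP: "inj_on (\<lambda>j. (i0, j)) J" by (auto simp: inj_on_def)
  have conv: "(\<Sum>(i,j)\<in>F. if i = i0 then h j else 0) = (\<Sum>j\<in>J. h j)" for h :: "nat \<Rightarrow> 'a"
  proof -
    have "(\<Sum>(i,j)\<in>F. if i = i0 then h j else 0) = (\<Sum>p\<in>F. if fst p = i0 then h (snd p) else 0)"
      by (intro sum.cong) auto
    also have "\<dots> = (\<Sum>p\<in>{p \<in> F. fst p = i0}. h (snd p))" by (rule sum.inter_filter[OF fF, symmetric])
    also have "\<dots> = (\<Sum>j\<in>J. h j)" unfolding F0eq by (simp add: sum.reindex[OF injP])
    finally show ?thesis .
  qed
  have conv0: "(\<Sum>(i,j)\<in>(\<lambda>j. (i0, j)) ` J. g i j) = (\<Sum>j\<in>J. g i0 j)" for g :: "nat \<Rightarrow> nat \<Rightarrow> 'a"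
    by (simp add: sum.reindex[OF injP])
  define x where "x = (\<Sum>(i,j)\<in>F. c i j *\<^sub>R e i j)"
  define xa where "xa = (\<Sum>(i,j)\<in>F. c i j *\<^sub>R e i (sA i j))"
  define xb where "xb = (\<Sum>(i,j)\<in>F. c i j *\<^sub>R e i (sB i j))"
  have na: "norm xa = norm x" unfolding xa_def x_def using spr[OF pA Fk] by simp
  have nb: "norm xb = norm x" unfolding xb_def x_def using spr[OF pB Fk] by simp
  have "xa - xb = (\<Sum>(i,j)\<in>F. c i j *\<^sub>R e i (sA i j) - c i j *\<^sub>R e i (sB i j))"
    unfolding xa_def xb_def by (simp add: sum_subtractf[symmetric] case_prod_beta)
  also have "\<dots> = (\<Sum>(i,j)\<in>F. if i = i0 then (c i0 j *\<^sub>R e i0 (L * j + i0) - c i0 j *\<^sub>R e i0 (L * j + i0 + 1)) else 0)"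
    by (intro sum.cong) (auto simp: sA_def sB_def)
  also have "\<dots> = (\<Sum>j\<in>J. (c i0 j *\<^sub>R e i0 (L * j + i0) - c i0 j *\<^sub>R e i0 (L * j + i0 + 1)))"
    by (rule conv)
  finally have dxy: "xa - xb = (\<Sum>j\<in>J. (c i0 j *\<^sub>R e i0 (L * j + i0) - c i0 j *\<^sub>R e i0 (L * j + i0 + 1)))" .
  have Lpos: "L > 0" unfolding L_def by simp
  have ip: "inj_on (\<lambda>j. L * j + i0) J" using Lpos by (auto simp: inj_on_def)
  have iq: "inj_on (\<lambda>j. L * j + i0 + 1) J" using Lpos by (auto simp: inj_on_def)
  have dj: "(\<lambda>j. L * j + i0) ` J \<inter> (\<lambda>j. L * j + i0 + 1) ` J = {}"
  proof -
    have "L * j + i0 \<noteq> L * j' + i0 + 1" for j j'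
    proof
      assume h: "L * j + i0 = L * j' + i0 + 1"
      have "(L * j + i0) mod L = (i0 + L * j) mod L" by (simp add: add.commute)
      also have "\<dots> = i0 mod L" by (rule mod_mult_self2)
      also have "\<dots> = i0" using i0 unfolding L_def by simp
      finally have m1: "(L * j + i0) mod L = i0" .
      have "(L * j' + i0 + 1) mod L = ((i0 + 1) + L * j') mod L" by (simp add: add.commute add.left_commute)
      also have "\<dots> = (i0 + 1) mod L" by (rule mod_mult_self2)
      also have "\<dots> = i0 + 1" using i0 unfolding L_def by simp
      finally have m2: "(L * j' + i0 + 1) mod L = i0 + 1" .
      show False using h m1 m2 by simp
    qed
    then show ?thesis by blast
  qed
  have "norm (\<Sum>j\<in>J. c i0 j *\<^sub>R e i0 (L * j + i0)) \<le> K * norm (xa - xb)"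
    unfolding dxy by (rule lemA2[OF rs fJ ip iq dj])
  also have "\<dots> \<le> K * (2 * norm x)"
  proof (rule mult_left_mono[OF _ K])
    show "norm (xa - xb) \<le> 2 * norm x" using norm_triangle_ineq4[of xa xb] na nb by simp
  qed
  finally have m: "norm (\<Sum>j\<in>J. c i0 j *\<^sub>R e i0 (L * j + i0)) \<le> K * (2 * norm x)" .
  have F0k: "(\<lambda>j. (i0, j)) ` J \<subseteq> {..<l} \<times> {..<k}" using Fk unfolding J_def by auto
  have "norm (\<Sum>j\<in>J. c i0 j *\<^sub>R e i0 j) = norm (\<Sum>j\<in>J. c i0 j *\<^sub>R e i0 (L * j + i0))"
    using spr[OF pA F0k, of c] unfolding conv0 sA_def by simp
  with m show ?thesis unfolding J_def x_def by simp
qed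

theorem theorem2p16:
  fixes l :: nat and e :: "nat \<Rightarrow> nat \<Rightarrow> 'a::banach"
  assumes "l \<ge> 1"
    and "plegma_spreading l e"
    and "\<And>i. i < l \<Longrightarrow> unconditional_basic (e i)"
  shows "unconditional_family l e"
proof -
  have l1: "l \<ge> 1" and sp: "plegma_spreading l e" and ub: "\<And>i. i < l \<Longrightarrow> unconditional_basic (e i)"
    using assms by auto
  have ne0: "\<forall>i<l. (\<forall>n. norm (e i n) = 1) \<and> schauder_basic (e i)"
    using sp unfolding plegma_spreading_def by (rule conjunct1)
  have ne: "norm (e i n) = 1" if "i < l" for i n using ne0 that by blast
  have "\<exists>K\<ge>0. \<forall>S A d. finite S \<longrightarrow> A \<subseteq> S \<longrightarrow>
           norm (\<Sum>n\<in>A. d n *\<^sub>R e i n) \<le> K * norm (\<Sum>n\<in>S. d n *\<^sub>R e i n)" if "i < l" for i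
    by (rule unc_supp_const) (use ne ub that in auto)
  then have "\<forall>i. \<exists>K. i < l \<longrightarrow> K \<ge> 0 \<and> (\<forall>S A d. finite S \<longrightarrow> A \<subseteq> S \<longrightarrow>
           norm (\<Sum>n\<in>A. d n *\<^sub>R e i n) \<le> K * norm (\<Sum>n\<in>S. d n *\<^sub>R e i n))" by blast
  then obtain Kf where Kf: "\<And>i. i < l \<Longrightarrow> Kf i \<ge> 0 \<and> (\<forall>S A d. finite S \<longrightarrow> A \<subseteq> S \<longrightarrow>
           norm (\<Sum>n\<in>A. d n *\<^sub>R e i n) \<le> Kf i * norm (\<Sum>n\<in>S. d n *\<^sub>R e i n))"
    by metis
  define K where "K = (\<Sum>i<l. Kf i)"
  have KfK: "Kf i \<le> K" if "i < l" for i
    unfolding K_def using that Kf by (intro member_le_sum) auto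
  have K0: "K \<ge> 0" unfolding K_def using Kf by (intro sum_nonneg) auto
  have rs: "norm (\<Sum>n\<in>A. d n *\<^sub>R e i n) \<le> K * norm (\<Sum>n\<in>S. d n *\<^sub>R e i n)"
    if "i < l" "finite S" "A \<subseteq> S" for i S A d
  proof -
    have "norm (\<Sum>n\<in>A. d n *\<^sub>R e i n) \<le> Kf i * norm (\<Sum>n\<in>S. d n *\<^sub>R e i n)"
      using Kf[OF that(1)] that(2,3) by blast
    also have "\<dots> \<le> K * norm (\<Sum>n\<in>S. d n *\<^sub>R e i n)"
      using KfK[OF that(1)] by (intro mult_right_mono) auto
    finally show ?thesis .
  qed
  define C where "C = real l * (K * (2 * K))"
  have C0: "C \<ge> 0" unfolding C_def using K0 by simp
  have fam: "norm (\<Sum>(i,j)\<in>G. c i j *\<^sub>R e i j) \<le> C * norm (\<Sum>(i,j)\<in>F. c i j *\<^sub>R e i j)"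
    if fF: "finite F" and GF: "G \<subseteq> F" and Fl: "F \<subseteq> {..<l} \<times> UNIV" for G F c
  proof -
    define x where "x = (\<Sum>(i,j)\<in>F. c i j *\<^sub>R e i j)"
    define Gi where "Gi i = {j. (i, j) \<in> G}" for i
    define Fi where "Fi i = {j. (i, j) \<in> F}" for i
    have fFi: "finite (Fi i)" for i
    proof -
      have "Fi i \<subseteq> snd ` F" unfolding Fi_def by (auto intro: rev_image_eqI)
      then show ?thesis using finite_subset finite_imageI[OF fF] by blast
    qed
    have GiFi: "Gi i \<subseteq> Fi i" for i unfolding Gi_def Fi_def using GF by auto
    have fGi: "finite (Gi i)" for i using finite_subset[OF GiFi fFi] .
    have Gs: "G = Sigma {..<l} Gi"
    proof (intro equalityI subsetI)
      fix p assume pG: "p \<in> G"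
      then have "fst p < l" using GF Fl by auto
      then show "p \<in> Sigma {..<l} Gi" using pG unfolding Gi_def by (cases p) auto
    next
      fix p assume "p \<in> Sigma {..<l} Gi"
      then show "p \<in> G" unfolding Gi_def by auto
    qed
    have "(\<Sum>(i,j)\<in>G. c i j *\<^sub>R e i j) = (\<Sum>i<l. \<Sum>j\<in>Gi i. c i j *\<^sub>R e i j)"
      unfolding Gs by (rule sum.Sigma[symmetric]) (auto simp: fGi)
    then have "norm (\<Sum>(i,j)\<in>G. c i j *\<^sub>R e i j) \<le> (\<Sum>i<l. norm (\<Sum>j\<in>Gi i. c i j *\<^sub>R e i j))"
      by (simp add: norm_sum)
    also have "\<dots> \<le> (\<Sum>i<l. K * (2 * K) * norm x)"
    proof (rule sum_mono)
      fix i assume "i \<in> {..<l}"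
      then have il: "i < l" by simp
      have "norm (\<Sum>j\<in>Gi i. c i j *\<^sub>R e i j) \<le> K * norm (\<Sum>j\<in>Fi i. c i j *\<^sub>R e i j)"
        by (rule rs[OF il fFi GiFi])
      also have "\<dots> \<le> K * (K * (2 * norm x))"
        using row_bound[OF sp il rs[OF il] fF Fl K0, of c] unfolding Fi_def x_def
        by (intro mult_left_mono K0) auto
      finally show "norm (\<Sum>j\<in>Gi i. c i j *\<^sub>R e i j) \<le> K * (2 * K) * norm x"
        by (simp add: algebra_simps)
    qed
    also have "\<dots> = C * norm x" unfolding C_def by simp
    finally show ?thesis unfolding x_def .
  qed
  define \<sigma> where "\<sigma> n = (n mod l, n div l)" for n
  define g where "g n = e (n mod l) (n div l)" for n
  have lpos: "l > 0" using l1 by simp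
  have inj\<sigma>: "inj \<sigma>"
  proof (rule injI)
    fix n m assume "\<sigma> n = \<sigma> m"
    then have "n mod l = m mod l" "n div l = m div l" unfolding \<sigma>_def by auto
    then show "n = m" by (metis div_mult_mod_eq)
  qed
  have img: "range \<sigma> = {..<l} \<times> UNIV"
  proof (intro equalityI subsetI)
    fix p assume "p \<in> range \<sigma>"
    then show "p \<in> {..<l} \<times> UNIV" unfolding \<sigma>_def using lpos by auto
  next
    fix p :: "nat \<times> nat" assume "p \<in> {..<l} \<times> UNIV"
    then have "fst p < l" by auto
    then have "\<sigma> (snd p * l + fst p) = p" unfolding \<sigma>_def by (cases p) auto
    then show "p \<in> range \<sigma>" by (metis rangeI)
  qed
  have bij: "bij_betw \<sigma> UNIV ({..<l} \<times> UNIV)" unfolding bij_betw_def using inj\<sigma> img by simp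
  have gsum: "(\<Sum>n\<in>A. d n *\<^sub>R g n) = (\<Sum>(i,j)\<in>\<sigma> ` A. d (j * l + i) *\<^sub>R e i j)" for A d
  proof -
    have "(\<Sum>(i,j)\<in>\<sigma> ` A. d (j * l + i) *\<^sub>R e i j) = (\<Sum>n\<in>A. (\<lambda>(i,j). d (j * l + i) *\<^sub>R e i j) (\<sigma> n))"
      using sum.reindex[OF inj_on_subset[OF inj\<sigma> subset_UNIV], of "\<lambda>(i,j). d (j * l + i) *\<^sub>R e i j" A]
      by (simp add: comp_def)
    also have "\<dots> = (\<Sum>n\<in>A. d n *\<^sub>R g n)" unfolding \<sigma>_def g_def by simp
    finally show ?thesis by simp
  qed
  have gsupp: "norm (\<Sum>n\<in>A. d n *\<^sub>R g n) \<le> C * norm (\<Sum>n\<in>S. d n *\<^sub>R g n)"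
    if "finite S" "A \<subseteq> S" for S A d
    unfolding gsum using that img by (intro fam) auto
  have gn: "norm (g n) = 1" for n unfolding g_def using lpos by (intro ne) simp
  have "unconditional_basic g" by (rule supp_imp_unconditional_basic[OF gn C0 gsupp])
  moreover have "(\<lambda>n. e (fst (\<sigma> n)) (snd (\<sigma> n))) = g" unfolding \<sigma>_def g_def by simp
  ultimately show ?thesis unfolding unconditional_family_def using bij by metis
qed


end
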